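(* Let $R$ be a commutative Noetherian ring of prime characteristic $p$ and $G$ an $x$-torsion-free left $R[x,f]$-module. Then both the set $\mathcal{A}(G)$ of special annihilator submodules of $G$ and the set $\mathcal{I}(G)$ of $G$-special $R$-ideals are closed under arbitrary intersections.
   Context: $R[x,f]$ is the Frobenius skew polynomial ring: free left $R$-module on $(x^i)_{i\ge0}$, $xr=r^px$. $x$-torsion-free: $xg=0\Rightarrow g=0$. A special annihilator submodule of $G$ is one of the form $\{g:\theta g=0\ \forall\theta\in\mathfrak{B}\}$ for a graded two-sided ideal $\mathfrak{B}=\bigoplus_n\mathfrak{b}_nx^n$ ($(\mathfrak{b}_n)$ an ascending chain of ideals). $\operatorname{grann}N$ is the set of $\sum r_ix^i$ with each $r_ix^i$ annihilating $N$. $\mathcal{I}(G)$ is the set of ideals $\mathfrak{b}$ of $R$ with $\operatorname{grann}N=\bigoplus_n\mathfrak{b}x^n$ for some $R[x,f]$-submodule $N$ of $G$. *)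

theory Defs
  imports Main "HOL.Modules" "HOL-Computational_Algebra.Primes"
begin

text \<open>Ideals of a commutative ring (type-class idiom: the ring is the whole type).\<close>
definition is_ideal :: "'a::comm_ring_1 set \<Rightarrow> bool" where
  "is_ideal I \<longleftrightarrow> 0 \<in> I \<and> (\<forall>a\<in>I. \<forall>b\<in>I. a + b \<in> I) \<and> (\<forall>r. \<forall>a\<in>I. r * a \<in> I)"

definition noetherian_ring :: "'a::comm_ring_1 itself \<Rightarrow> bool" where
  "noetherian_ring _ \<longleftrightarrow>
     (\<forall>I :: nat \<Rightarrow> 'a set. (\<forall>n. is_ideal (I n)) \<and> (\<forall>n. I n \<subseteq> I (Suc n))
        \<longrightarrow> (\<exists>m. \<forall>n\<ge>m. I n = I m))"

text \<open>A left module over the Frobenius skew polynomial ring R[x,f], R of characteristic p: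
  an R-module G (scalar action smul) together with the action X of x, which is additive
  and satisfies x (r g) = r^p (x g), i.e. x r = r^p x.\<close>
definition frob_skew_module ::
  "('a::comm_ring_1 \<Rightarrow> 'g::ab_group_add \<Rightarrow> 'g) \<Rightarrow> ('g \<Rightarrow> 'g) \<Rightarrow> bool" where
  "frob_skew_module smul X \<longleftrightarrow>
     module smul \<and> (\<forall>g h. X (g + h) = X g + X h) \<and>
     (\<forall>r g. X (smul r g) = smul (r ^ CHAR('a)) (X g))"

definition x_torsion_free :: "('g::ab_group_add \<Rightarrow> 'g) \<Rightarrow> bool" where
  "x_torsion_free X \<longleftrightarrow> (\<forall>g. X g = 0 \<longrightarrow> g = 0)"

text \<open>Elements of R[x,f] are represented by their coefficient sequences
  \<open>\<theta> :: nat \<Rightarrow> 'a\<close> (\<open>\<theta> = \<Sum> \<theta> n x^n\<close>) with finite support.\<close>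
definition skew_poly :: "(nat \<Rightarrow> 'a::zero) \<Rightarrow> bool" where
  "skew_poly \<theta> \<longleftrightarrow> finite {n. \<theta> n \<noteq> 0}"

definition skew_act ::
  "('a::comm_ring_1 \<Rightarrow> 'g::ab_group_add \<Rightarrow> 'g) \<Rightarrow> ('g \<Rightarrow> 'g) \<Rightarrow> (nat \<Rightarrow> 'a) \<Rightarrow> 'g \<Rightarrow> 'g" where
  "skew_act smul X \<theta> g = (\<Sum>n\<in>{n. \<theta> n \<noteq> 0}. smul (\<theta> n) ((X ^^ n) g))"

definition skew_submodule ::
  "('a::comm_ring_1 \<Rightarrow> 'g::ab_group_add \<Rightarrow> 'g) \<Rightarrow> ('g \<Rightarrow> 'g) \<Rightarrow> 'g set \<Rightarrow> bool" where
  "skew_submodule smul X N \<longleftrightarrow> module.subspace smul N \<and> (\<forall>g\<in>N. X g \<in> N)"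

definition graded_ideal_of :: "(nat \<Rightarrow> 'a::comm_ring_1 set) \<Rightarrow> (nat \<Rightarrow> 'a) set" where
  "graded_ideal_of b = {\<theta>. skew_poly \<theta> \<and> (\<forall>n. \<theta> n \<in> b n)}"

text \<open>Sequences (b_n) giving graded two-sided ideals: ascending chains of ideals.\<close>
definition graded_ideal_seq :: "(nat \<Rightarrow> 'a::comm_ring_1 set) \<Rightarrow> bool" where
  "graded_ideal_seq b \<longleftrightarrow> (\<forall>n. is_ideal (b n)) \<and> (\<forall>n. b n \<subseteq> b (Suc n))"

definition ann_G ::
  "('a::comm_ring_1 \<Rightarrow> 'g::ab_group_add \<Rightarrow> 'g) \<Rightarrow> ('g \<Rightarrow> 'g) \<Rightarrow> (nat \<Rightarrow> 'a) set \<Rightarrow> 'g set" where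
  "ann_G smul X B = {g. \<forall>\<theta>\<in>B. skew_act smul X \<theta> g = 0}"

definition special_ann_submodules ::
  "('a::comm_ring_1 \<Rightarrow> 'g::ab_group_add \<Rightarrow> 'g) \<Rightarrow> ('g \<Rightarrow> 'g) \<Rightarrow> 'g set set" where
  "special_ann_submodules smul X =
     {ann_G smul X (graded_ideal_of b) | b. graded_ideal_seq b}"

definition grann ::
  "('a::comm_ring_1 \<Rightarrow> 'g::ab_group_add \<Rightarrow> 'g) \<Rightarrow> ('g \<Rightarrow> 'g) \<Rightarrow> 'g set \<Rightarrow> (nat \<Rightarrow> 'a) set" where
  "grann smul X N = {\<theta>. skew_poly \<theta> \<and> (\<forall>i. \<forall>g\<in>N. smul (\<theta> i) ((X ^^ i) g) = 0)}"

definition special_ideals ::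
  "('a::comm_ring_1 \<Rightarrow> 'g::ab_group_add \<Rightarrow> 'g) \<Rightarrow> ('g \<Rightarrow> 'g) \<Rightarrow> 'a set set" where
  "special_ideals smul X =
     {\<bb>. is_ideal \<bb> \<and> (\<exists>N. skew_submodule smul X N \<and>
                          grann smul X N = graded_ideal_of (\<lambda>_. \<bb>))}"

end

theory Submission
  imports Defs
begin

lemma ann_char:
  assumes m: "module smul" and id: "\<forall>n. is_ideal (b n)"
  shows "g \<in> ann_G smul X (graded_ideal_of b) \<longleftrightarrow> (\<forall>n. \<forall>r\<in>b n. smul r ((X ^^ n) g) = 0)"
proof
  assume g: "g \<in> ann_G smul X (graded_ideal_of b)"
  show "\<forall>n. \<forall>r\<in>b n. smul r ((X ^^ n) g) = 0"
  proof (intro allI ballI)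
    fix n r assume r: "r \<in> b n"
    define \<theta> where "\<theta> = (\<lambda>k. if k = n then r else 0)"
    have sub: "{k. \<theta> k \<noteq> 0} \<subseteq> {n}" by (auto simp: \<theta>_def)
    hence "skew_poly \<theta>" unfolding skew_poly_def using finite_subset by blast
    moreover have "\<forall>k. \<theta> k \<in> b k" using id r unfolding \<theta>_def is_ideal_def by auto
    ultimately have "\<theta> \<in> graded_ideal_of b" unfolding graded_ideal_of_def by auto
    hence z: "skew_act smul X \<theta> g = 0" using g unfolding ann_G_def by auto
    show "smul r ((X ^^ n) g) = 0"
    proof (cases "r = 0")
      case True thus ?thesis using module.scale_zero_left[OF m] by simp
    next
      case False
      hence "{k. \<theta> k \<noteq> 0} = {n}" by (auto simp: \<theta>_def)
      thus ?thesis using z unfolding skew_act_def by (simp add: \<theta>_def)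
    qed
  qed
next
  assume h: "\<forall>n. \<forall>r\<in>b n. smul r ((X ^^ n) g) = 0"
  show "g \<in> ann_G smul X (graded_ideal_of b)"
    unfolding ann_G_def skew_act_def graded_ideal_of_def using h
    by (auto intro!: sum.neutral)
qed

lemma ann_ideal:
  assumes m: "module smul"
  shows "is_ideal {r. smul r h = 0}"
  unfolding is_ideal_def
  using module.scale_zero_left[OF m] module.scale_left_distrib[OF m]
    module.scale_scale[OF m, symmetric] module.scale_zero_right[OF m]
  by auto

lemma iter_lin:
  fixes smul :: "'a::comm_ring_1 \<Rightarrow> 'g::ab_group_add \<Rightarrow> 'g"
  assumes f: "frob_skew_module smul X"
  shows "(X ^^ i) (smul c x + y) = smul (c ^ (CHAR('a) ^ i)) ((X ^^ i) x) + (X ^^ i) y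
     \<and> (X ^^ i) 0 = 0"
proof (induction i)
  case 0 then show ?case by simp
next
  case (Suc i)
  have add: "\<And>g h. X (g + h) = X g + X h" and sc: "\<And>r g. X (smul r g) = smul (r ^ CHAR('a)) (X g)"
    using f unfolding frob_skew_module_def by auto
  have X0: "X 0 = 0" using add[of 0 0] by simp
  show ?case using Suc by (simp add: add sc X0 power_mult[symmetric] mult.commute)
qed

theorem corollary1p12:
  fixes smul :: "'a::comm_ring_1 \<Rightarrow> 'g::ab_group_add \<Rightarrow> 'g"
    and X :: "'g \<Rightarrow> 'g"
  assumes "noetherian_ring TYPE('a)"
    and "prime CHAR('a)"
    and "frob_skew_module smul X"
    and "x_torsion_free X"
  shows "(\<forall>S. S \<subseteq> special_ann_submodules smul X \<longrightarrow> \<Inter>S \<in> special_ann_submodules smul X)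
       \<and> (\<forall>T. T \<subseteq> special_ideals smul X \<longrightarrow> \<Inter>T \<in> special_ideals smul X)"
proof -
  have m: "module smul" using assms(3) unfolding frob_skew_module_def by auto
  have add: "\<And>g h. X (g + h) = X g + X h" and sc: "\<And>r g. X (smul r g) = smul (r ^ CHAR('a)) (X g)"
    using assms(3) unfolding frob_skew_module_def by auto
  have X0: "X 0 = 0" using add[of 0 0] by simp
  have part1: "\<Inter>S \<in> special_ann_submodules smul X" if S: "S \<subseteq> special_ann_submodules smul X" for S
  proof -
    have "\<forall>M\<in>S. \<exists>b. graded_ideal_seq b \<and> M = ann_G smul X (graded_ideal_of b)"
      using S unfolding special_ann_submodules_def by blast
    then obtain B where B: "\<And>M. M \<in> S \<Longrightarrow> graded_ideal_seq (B M) \<and> M = ann_G smul X (graded_ideal_of (B M))"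
      by metis
    define c where "c n = \<Inter>{I. is_ideal I \<and> (\<forall>M\<in>S. B M n \<subseteq> I)}" for n
    have cid: "is_ideal (c n)" for n unfolding c_def is_ideal_def by auto
    have Bc: "M \<in> S \<Longrightarrow> B M n \<subseteq> c n" for M n unfolding c_def by auto
    have cmin: "is_ideal I \<Longrightarrow> (\<forall>M\<in>S. B M n \<subseteq> I) \<Longrightarrow> c n \<subseteq> I" for I n
      unfolding c_def by auto
    have cseq: "graded_ideal_seq c"
      unfolding graded_ideal_seq_def
    proof (intro conjI allI)
      fix n show "is_ideal (c n)" by (rule cid)
      show "c n \<subseteq> c (Suc n)"
      proof (rule cmin[OF cid])
        show "\<forall>M\<in>S. B M n \<subseteq> c (Suc n)"
          using B Bc unfolding graded_ideal_seq_def by blast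
      qed
    qed
    have Bid: "M \<in> S \<Longrightarrow> \<forall>n. is_ideal (B M n)" for M using B unfolding graded_ideal_seq_def by blast
    have "\<Inter>S = ann_G smul X (graded_ideal_of c)"
    proof (intro equalityI subsetI)
      fix g assume g: "g \<in> \<Inter>S"
      show "g \<in> ann_G smul X (graded_ideal_of c)"
        unfolding ann_char[OF m] 
      proof (subst ann_char[OF m], simp add: cid, intro allI)
        fix n
        have "c n \<subseteq> {r. smul r ((X ^^ n) g) = 0}"
        proof (rule cmin[OF ann_ideal[OF m]], intro ballI subsetI)
          fix M r assume M: "M \<in> S" and r: "r \<in> B M n"
          have "g \<in> ann_G smul X (graded_ideal_of (B M))" using g M B by blast
          thus "r \<in> {r. smul r ((X ^^ n) g) = 0}"
            using ann_char[OF m Bid[OF M]] r by auto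
        qed
        thus "\<forall>r\<in>c n. smul r ((X ^^ n) g) = 0" by auto
      qed
    next
      fix g assume g: "g \<in> ann_G smul X (graded_ideal_of c)"
      show "g \<in> \<Inter>S"
      proof
        fix M assume M: "M \<in> S"
        have "\<forall>n. \<forall>r\<in>c n. smul r ((X ^^ n) g) = 0" using g ann_char[OF m] cid by blast
        hence "g \<in> ann_G smul X (graded_ideal_of (B M))"
          using ann_char[OF m Bid[OF M]] Bc[OF M] by blast
        thus "g \<in> M" using B M by blast
      qed
    qed
    thus ?thesis using cseq unfolding special_ann_submodules_def by blast
  qed
  have part2: "\<Inter>T \<in> special_ideals smul X" if T: "T \<subseteq> special_ideals smul X" for T
  proof -
    have "\<forall>b\<in>T. \<exists>N. skew_submodule smul X N \<and> grann smul X N = graded_ideal_of (\<lambda>_. b)"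
      using T unfolding special_ideals_def by blast
    then obtain NN where NN: "\<And>b. b \<in> T \<Longrightarrow> skew_submodule smul X (NN b) \<and>
        grann smul X (NN b) = graded_ideal_of (\<lambda>_. b)" by metis
    define U where "U = (\<Union>b\<in>T. NN b)"
    define N where "N = module.span smul U"
    have idT: "is_ideal (\<Inter>T)" using T unfolding special_ideals_def is_ideal_def by auto
    have XN: "\<forall>g\<in>N. X g \<in> N"
    proof
      fix g assume "g \<in> N"
      thus "X g \<in> N" unfolding N_def
      proof (rule module.span_induct_alt[OF m, where h="\<lambda>z. X z \<in> module.span smul U"])
        show "X 0 \<in> module.span smul U" using X0 module.span_zero[OF m] by simp
      next
        fix c x y assume step: "x \<in> U" "X y \<in> module.span smul U"
        then obtain b where b: "b \<in> T" "x \<in> NN b" unfolding U_def by blast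
        hence "X x \<in> U" using NN[OF b(1)] unfolding skew_submodule_def U_def by blast
        hence "X x \<in> module.span smul U" using module.span_base[OF m] by blast
        thus "X (smul c x + y) \<in> module.span smul U" using step by (simp add: add sc module.span_add[OF m] module.span_scale[OF m])
      qed
    qed
    have sub: "skew_submodule smul X N"
      unfolding skew_submodule_def N_def using XN N_def module.subspace_span[OF m] by blast
    have "grann smul X N = graded_ideal_of (\<lambda>_. \<Inter>T)"
    proof (intro equalityI subsetI)
      fix \<theta> assume th: "\<theta> \<in> grann smul X N"
      have "\<theta> n \<in> b" if b: "b \<in> T" for n b
      proof -
        have "NN b \<subseteq> N" unfolding N_def U_def using b module.span_superset[OF m] by blast
        hence "\<theta> \<in> grann smul X (NN b)" using th unfolding grann_def by blast
        thus ?thesis using NN[OF b] unfolding graded_ideal_of_def by auto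
      qed
      thus "\<theta> \<in> graded_ideal_of (\<lambda>_. \<Inter>T)" using th
        unfolding graded_ideal_of_def grann_def by auto
    next
      fix \<theta> assume th: "\<theta> \<in> graded_ideal_of (\<lambda>_. \<Inter>T)"
      have "smul (\<theta> i) ((X ^^ i) g) = 0" if g: "g \<in> N" for i g
        using g unfolding N_def
      proof (rule module.span_induct_alt[OF m, where h="\<lambda>z. smul (\<theta> i) ((X ^^ i) z) = 0"])
        show "smul (\<theta> i) ((X ^^ i) 0) = 0" using iter_lin[OF assms(3)] module.scale_zero_right[OF m] by metis
      next
        fix c x y assume step: "x \<in> U" "smul (\<theta> i) ((X ^^ i) y) = 0"
        then obtain b where b: "b \<in> T" "x \<in> NN b" unfolding U_def by blast
        have "\<theta> \<in> graded_ideal_of (\<lambda>_. b)" using th b(1) unfolding graded_ideal_of_def by auto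
        hence "\<theta> \<in> grann smul X (NN b)" using NN[OF b(1)] by simp
        hence x0: "smul (\<theta> i) ((X ^^ i) x) = 0" using b(2) unfolding grann_def by blast
        have "smul (\<theta> i) (smul (c ^ CHAR('a) ^ i) ((X ^^ i) x)) = 0"
          using x0 module.scale_left_commute[OF m] module.scale_zero_right[OF m] by metis
        then show "smul (\<theta> i) ((X ^^ i) (smul c x + y)) = 0" using step x0 iter_lin[OF assms(3)]
          module.scale_right_distrib[OF m] module.scale_left_commute[OF m]
          module.scale_zero_right[OF m] by simp
      qed
      thus "\<theta> \<in> grann smul X N" using th unfolding grann_def graded_ideal_of_def by auto
    qed
    thus ?thesis using idT sub unfolding special_ideals_def by blast
  qed
  show ?thesis using part1 part2 by blast
qed

end
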